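(* Let $\widehat M$ be a cooperative Markov game with MMDP $M$, $(S_{target},S_{avoid})$ a reach-avoid objective, and $(\pi_{comm},\pi_{act})\in\Pi^{pos}_{comm}(\mathcal O,K)\times\Pi^{pos}_{act}(M)$, and assume all occupancy measures $\nu_{s,a}$ ($s\notin\mathcal T$) of the full-communication process are finite. Then for every agent $i\in[N]$ and every $c\in\mathcal A_{comm}$, $$G^i\le\bar G^i\quad\text{and}\quad G^c\le\bar G^c,$$ where $\bar G^i=-\sum_{o,l^i,a^i}\nu_{o,l^i,a^i}\,w'(o,i)\log\frac{\nu_{o,l^i,a^i}}{\sum_{b^i\in\mathcal A^i}\nu_{o,l^i,b^i}}-\sum_{o,l^i,a^i,o^i_1,l^i_1}\nu_{o,l^i,a^i}\,w'(o,i)\,P^i((o^i,l^i),a^i)((o^i_1,l^i_1))\log P^i((o^i,l^i),a^i)((o^i_1,l^i_1))$, $\bar G^c=-\sum_{o,l^c,a^c}\nu_{o,l^c,a^c}\,w''(o,c)\log\frac{\nu_{o,l^c,a^c}}{\sum_{b^c\in\mathcal A^c}\nu_{o,l^c,b^c}}-\sum_{o,l^c,a^c,o^c_1,l^c_1}\nu_{o,l^c,a^c}\,w''(o,c)\,P^c((o^c,l^c),a^c)((o^c_1,l^c_1))\log P^c((o^c,l^c),a^c)((o^c_1,l^c_1))$.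
   Context: MMDP: there are $N\ge1$ agents, identified with $[N]=\{1,\dots,N\}$. Agent $i$ has a finite local state set $\mathcal S^i$, finite local action set $\mathcal A^i$, local transition function $P^i:\mathcal S^i\times\mathcal A^i\to\Delta(\mathcal S^i)$ and initial local state $s^i_{init}$. Joint states $\mathcal S=\prod_i\mathcal S^i$, joint actions $\mathcal A=\prod_i\mathcal A^i$, joint transitions $P(s,a)(u)=\prod_{i}P^i(s^i,a^i)(u^i)$, initial state $s_{init}=(s^1_{init},\dots,s^N_{init})$. A positional joint action policy is a map $\pi_{act}:\mathcal S\to\Delta(\mathcal A)$; $\Pi^{pos}_{act}(M)$ is the set of these. Cooperative Markov game $\widehat M=(M,\mathcal O^1,\dots,\mathcal O^N,\mathcal L^1,\dots,\mathcal L^N,K)$: each $\mathcal S^i=\mathcal O^i\times\mathcal L^i$ (public part $o^i$, local part $l^i$); $\mathcal O=\prod_i\mathcal O^i$, $\mathcal L=\prod_i\mathcal L^i$, and a joint state is written $s=(o,l)$. For $c\subseteq[N]$, $\mathcal O^c=\prod_{j\in c}\mathcal O^j$, $\mathcal L^c=\prod_{j\in c}\mathcal L^j$, $\mathcal A^c=\prod_{j\in c}\mathcal A^j$, $o^c,l^c,a^c$ denote restrictions to coordinates in $c$, and $P^c((o^c,l^c),a^c)((o^c_1,l^c_1))=\prod_{j\in c}P^j((o^j,l^j),a^j)((o^j_1,l^j_1))$. $K\in\{0,\dots,N\}$ and $\mathcal A_{comm}$ is the set of subsets of $[N]$ of size $K$ (so $\mathcal A_{comm}=\{\emptyset\}$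 if $K=0$). A positional communication policy is a map $\pi_{comm}:\mathcal O\to\Delta(\mathcal A_{comm})$; $\Pi^{pos}_{comm}(\mathcal O,K)$ is the set of these. Reach-avoid objective: disjoint sets $S_{target},S_{avoid}\subseteq\mathcal S$; put $\mathcal T=S_{target}\cup S_{avoid}$. Full-communication process $M_{\pi_{act}}$: random sequence $S_0=s_{init},A_1,S_1,A_2,S_2,\dots$ with $\mathbb P(A_t=a,S_t=s'\mid S_0,A_1,\dots,S_{t-1}=s)=\pi_{act}(s)(a)P(s,a)(s')$. Write $S_t=(O_t,L_t)$ and $A^c_t,O^c_t,L^c_t$ (resp. $A^i_t,O^i_t,L^i_t$) for components in $c$ (resp. $i$). The process is regarded as stopped upon entering $\mathcal T$: with $E_{t}=\{S_0,\dots,S_{t}\notin\mathcal T\}$, every probability of an event concerning times $t-1,t$ is the probability of that event intersected with $E_{t-1}$, and conditional probabilities condition on the conditioning event intersected with $E_{t-1}$. For $c\subseteq[N]$ and $t\ge1$ let $q^c_t(a^c,o^c_1,l^c_1\mid o,l^c)=\mathbb P(A^c_t=a^c,O^c_t=o^c_1,L^c_t=l^c_1\mid O_{t-1}=o,L^c_{t-1}=l^c,E_{t-1})$ (write $q^i_t$ for $c=\{i\}$). Weights: $w'(o,i)=\sum_{c\in\mathcal A_{comm},\,i\notin c}\pi_{comm}(o)(c)$ and $w''(o,c)=\pi_{comm}(o)(c)$. $G^i=\sum_{t\ge1}\sum_{o\in\mathcal O,l^i\in\mathcal L^i}w'(o,i)\,\mathbb P(O_{t-1}=o,L^i_{t-1}=l^i,E_{t-1})\Big(-\sum_{a^i,o^i_1,l^i_1}q^i_t\log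 q^i_t\Big)$ with $q^i_t=q^i_t(a^i,o^i_1,l^i_1\mid o,l^i)$; $G^c=\sum_{t\ge1}\sum_{o\in\mathcal O,l^c\in\mathcal L^c}w''(o,c)\,\mathbb P(O_{t-1}=o,L^c_{t-1}=l^c,E_{t-1})\Big(-\sum_{a^c,o^c_1,l^c_1}q^c_t\log q^c_t\Big)$. Occupancy measures: $\nu_{s,a}=\sum_{t\ge1}\mathbb P(S_{t-1}=s,A_t=a,E_{t-1})$ for $s\notin\mathcal T$; marginals $\nu_{o,l^c,a^c}=\sum\nu_{(o,l),a}$ over all $l\in\mathcal L$ with restriction $l^c$ and $(o,l)\notin\mathcal T$, and all $a\in\mathcal A$ with restriction $a^c$ ($\nu_{o,l^i,a^i}$ for $c=\{i\}$). Conventions: $0\log0=0$; summands with $\nu=0$ are $0$. *)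

theory Defs
  imports "HOL-Probability.Probability"
begin

(* Agent i has public-part carrier Ob i, local-part carrier Lc i,
   action carrier Ac i (all finite), and local transition Pt i :: ('o x 'l) => 'a => ('o x 'l) pmf.
   Restriction to a coalition c is 'restrict _ c'. *)

type_synonym ('o,'l) jstate = "(nat \<Rightarrow> 'o) \<times> (nat \<Rightarrow> 'l)"

definition agents :: "nat \<Rightarrow> nat set" where
  "agents N = {1..N}"

definition jstates :: "nat \<Rightarrow> (nat \<Rightarrow> 'o set) \<Rightarrow> (nat \<Rightarrow> 'l set) \<Rightarrow> ('o,'l) jstate set" where
  "jstates N Ob Lc = PiE (agents N) Ob \<times> PiE (agents N) Lc"

definition jacts :: "nat \<Rightarrow> (nat \<Rightarrow> 'a set) \<Rightarrow> (nat \<Rightarrow> 'a) set" where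
  "jacts N Ac = PiE (agents N) Ac"

definition Acomm :: "nat \<Rightarrow> nat \<Rightarrow> nat set set" where
  "Acomm N K = {c. c \<subseteq> agents N \<and> card c = K}"

definition Pcoal :: "(nat \<Rightarrow> 'o \<times> 'l \<Rightarrow> 'a \<Rightarrow> ('o \<times> 'l) pmf) \<Rightarrow> nat set
    \<Rightarrow> ('o,'l) jstate \<Rightarrow> (nat \<Rightarrow> 'a) \<Rightarrow> ('o,'l) jstate \<Rightarrow> real" where
  "Pcoal Pt c s a s1 = (\<Prod>j\<in>c. pmf (Pt j (fst s j, snd s j) (a j)) (fst s1 j, snd s1 j))"

definition jtrans :: "nat \<Rightarrow> (nat \<Rightarrow> 'o \<times> 'l \<Rightarrow> 'a \<Rightarrow> ('o \<times> 'l) pmf)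
    \<Rightarrow> ('o,'l) jstate \<Rightarrow> (nat \<Rightarrow> 'a) \<Rightarrow> ('o,'l) jstate \<Rightarrow> real" where
  "jtrans N Pt s a s1 = Pcoal Pt (agents N) s a s1"

text \<open>Stopped full-communication process: palpha ... n s = P(S_n = s, E_n)
  where E_n = {S_0,...,S_n not in T}.\<close>
primrec palpha :: "nat \<Rightarrow> (nat \<Rightarrow> 'o set) \<Rightarrow> (nat \<Rightarrow> 'l set) \<Rightarrow> (nat \<Rightarrow> 'a set)
    \<Rightarrow> (nat \<Rightarrow> 'o \<times> 'l \<Rightarrow> 'a \<Rightarrow> ('o \<times> 'l) pmf) \<Rightarrow> ('o,'l) jstate \<Rightarrow> ('o,'l) jstate set
    \<Rightarrow> (('o,'l) jstate \<Rightarrow> (nat \<Rightarrow> 'a) pmf) \<Rightarrow> nat \<Rightarrow> ('o,'l) jstate \<Rightarrow> real" where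
  "palpha N Ob Lc Ac Pt sinit T pia 0 s = (if s = sinit \<and> s \<notin> T then 1 else 0)"
| "palpha N Ob Lc Ac Pt sinit T pia (Suc n) s1 =
     (if s1 \<notin> T then
        (\<Sum>s\<in>jstates N Ob Lc. \<Sum>a\<in>jacts N Ac.
            palpha N Ob Lc Ac Pt sinit T pia n s * pmf (pia s) a * jtrans N Pt s a s1)
      else 0)"

text \<open>pjoint ... n s a s1 = P(S_n = s, A_{n+1} = a, S_{n+1} = s1, E_n).\<close>
definition pjoint where
  "pjoint N Ob Lc Ac Pt sinit T pia n s a s1 =
     palpha N Ob Lc Ac Pt sinit T pia n s * pmf (pia s) a * jtrans N Pt s a s1"

text \<open>occ ... n s a = P(S_n = s, A_{n+1} = a, E_n); occupancy measure nu_{s,a} is its sum over n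
  (i.e. over t = n+1 >= 1).\<close>
definition occ where
  "occ N Ob Lc Ac Pt sinit T pia n s a = palpha N Ob Lc Ac Pt sinit T pia n s * pmf (pia s) a"

definition occupancy where
  "occupancy N Ob Lc Ac Pt sinit T pia s a = (\<Sum>n. occ N Ob Lc Ac Pt sinit T pia n s a)"

definition occ_marg where
  "occ_marg N Ob Lc Ac Pt sinit T pia c u lc ac =
     (\<Sum>l\<in>{l\<in>PiE (agents N) Lc. restrict l c = lc \<and> (u,l) \<notin> T}.
        \<Sum>a\<in>{a\<in>jacts N Ac. restrict a c = ac}.
          occupancy N Ob Lc Ac Pt sinit T pia (u,l) a)"

definition pden where
  "pden N Ob Lc Ac Pt sinit T pia c n u lc =
     (\<Sum>l\<in>{l\<in>PiE (agents N) Lc. restrict l c = lc}. palpha N Ob Lc Ac Pt sinit T pia n (u,l))"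

definition pnum where
  "pnum N Ob Lc Ac Pt sinit T pia c n u lc ac o1c l1c =
     (\<Sum>l\<in>{l\<in>PiE (agents N) Lc. restrict l c = lc}.
       \<Sum>a\<in>{a\<in>jacts N Ac. restrict a c = ac}.
        \<Sum>s1\<in>{s1\<in>jstates N Ob Lc. restrict (fst s1) c = o1c \<and> restrict (snd s1) c = l1c}.
          pjoint N Ob Lc Ac Pt sinit T pia n (u,l) a s1)"

definition qcond where
  "qcond N Ob Lc Ac Pt sinit T pia c n u lc ac o1c l1c =
     pnum N Ob Lc Ac Pt sinit T pia c n u lc ac o1c l1c / pden N Ob Lc Ac Pt sinit T pia c n u lc"

definition qentropy where
  "qentropy N Ob Lc Ac Pt sinit T pia c n u lc =
     - (\<Sum>ac\<in>PiE c Ac. \<Sum>o1c\<in>PiE c Ob. \<Sum>l1c\<in>PiE c Lc.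
          qcond N Ob Lc Ac Pt sinit T pia c n u lc ac o1c l1c
          * ln (qcond N Ob Lc Ac Pt sinit T pia c n u lc ac o1c l1c))"

text \<open>G with coalition c and weight w :: public joint state => real (time index t = n+1 >= 1).
  The sum over t of nonnegative terms is taken in ennreal (it may a priori be infinite).\<close>
definition Gval where
  "Gval N Ob Lc Ac Pt sinit T pia c w =
     (\<Sum>n. ennreal (\<Sum>u\<in>PiE (agents N) Ob. \<Sum>lc\<in>PiE c Lc.
        w u * pden N Ob Lc Ac Pt sinit T pia c n u lc * qentropy N Ob Lc Ac Pt sinit T pia c n u lc))"

definition Gbar where
  "Gbar N Ob Lc Ac Pt sinit T pia c w =
     - (\<Sum>u\<in>PiE (agents N) Ob. \<Sum>lc\<in>PiE c Lc. \<Sum>ac\<in>PiE c Ac.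
          occ_marg N Ob Lc Ac Pt sinit T pia c u lc ac * w u
          * ln (occ_marg N Ob Lc Ac Pt sinit T pia c u lc ac
                / (\<Sum>bc\<in>PiE c Ac. occ_marg N Ob Lc Ac Pt sinit T pia c u lc bc)))
     - (\<Sum>u\<in>PiE (agents N) Ob. \<Sum>lc\<in>PiE c Lc. \<Sum>ac\<in>PiE c Ac. \<Sum>o1c\<in>PiE c Ob. \<Sum>l1c\<in>PiE c Lc.
          occ_marg N Ob Lc Ac Pt sinit T pia c u lc ac * w u
          * Pcoal Pt c (u,lc) ac (o1c,l1c) * ln (Pcoal Pt c (u,lc) ac (o1c,l1c)))"

definition wprime :: "nat \<Rightarrow> nat \<Rightarrow> ((nat \<Rightarrow> 'o) \<Rightarrow> nat set pmf) \<Rightarrow> (nat \<Rightarrow> 'o) \<Rightarrow> nat \<Rightarrow> real" where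
  "wprime N K pic u i = (\<Sum>c\<in>{c\<in>Acomm N K. i \<notin> c}. pmf (pic u) c)"

definition wdprime :: "((nat \<Rightarrow> 'o) \<Rightarrow> nat set pmf) \<Rightarrow> (nat \<Rightarrow> 'o) \<Rightarrow> nat set \<Rightarrow> real" where
  "wdprime pic u c = pmf (pic u) c"

end

theory Submission
  imports Defs
begin
lemma logsum2:
  fixes x y X Y :: real
  assumes "0 \<le> x" "x \<le> X" "0 \<le> y" "y \<le> Y"
  shows "(x+y) * ln ((x+y)/(X+Y)) \<le> x * ln (x/X) + y * ln (y/Y)"
proof (cases "x = 0 \<or> y = 0")
  case True
  then show ?thesis
  proof
    assume x0: "x = 0"
    show ?thesis
    proof (cases "y = 0")
      case False
      hence yp: "y > 0" using assms by auto
      have "y/(X+Y) \<le> y/Y" using assms yp x0 by (intro divide_left_mono) auto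
      hence "ln (y/(X+Y)) \<le> ln (y/Y)" using assms yp x0 by (subst ln_le_cancel_iff) auto
      thus ?thesis using x0 yp by (simp add: mult_left_mono)
    qed (simp add: x0)
  next
    assume y0: "y = 0"
    show ?thesis
    proof (cases "x = 0")
      case False
      hence xp: "x > 0" using assms by auto
      have "x/(X+Y) \<le> x/X" using assms xp y0 by (intro divide_left_mono) auto
      hence "ln (x/(X+Y)) \<le> ln (x/X)" using assms xp y0 by (subst ln_le_cancel_iff) auto
      thus ?thesis using y0 xp by (simp add: mult_left_mono)
    qed (simp add: y0)
  qed
next
  case False
  hence xp: "x > 0" and yp: "y > 0" using assms by auto
  hence Xp: "X > 0" and Yp: "Y > 0" using assms by auto
  define S where "S = x + y"
  define T where "T = X + Y"
  have Sp: "S > 0" and Tp: "T > 0" using xp yp Xp Yp by (auto simp: S_def T_def)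
  have h1: "ln (X*S/(x*T)) \<le> X*S/(x*T) - 1" using xp Xp Sp Tp by (intro ln_le_minus_one) auto
  have h2: "ln (Y*S/(y*T)) \<le> Y*S/(y*T) - 1" using yp Yp Sp Tp by (intro ln_le_minus_one) auto
  have e1: "ln (X*S/(x*T)) = ln X + ln S - ln x - ln T" using xp Xp Sp Tp by (simp add: ln_div ln_mult)
  have e2: "ln (Y*S/(y*T)) = ln Y + ln S - ln y - ln T" using yp Yp Sp Tp by (simp add: ln_div ln_mult)
  have i1: "x * (ln X + ln S - ln x - ln T) \<le> X*S/T - x"
  proof -
    have "x * (ln X + ln S - ln x - ln T) \<le> x * (X*S/(x*T) - 1)"
      using h1 e1 xp by (intro mult_left_mono) auto
    also have "\<dots> = X*S/T - x" using xp by (simp add: field_simps)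
    finally show ?thesis .
  qed
  have i2: "y * (ln Y + ln S - ln y - ln T) \<le> Y*S/T - y"
  proof -
    have "y * (ln Y + ln S - ln y - ln T) \<le> y * (Y*S/(y*T) - 1)"
      using h2 e2 yp by (intro mult_left_mono) auto
    also have "\<dots> = Y*S/T - y" using yp by (simp add: field_simps)
    finally show ?thesis .
  qed
  have sum0: "X*S/T - x + (Y*S/T - y) = 0" using Tp by (simp add: S_def T_def field_simps)
  have "S * ln (S/T) = x * (ln S - ln T) + y * (ln S - ln T)" using Sp Tp by (simp add: ln_div S_def algebra_simps)
  moreover have "x * ln (x/X) + y * ln (y/Y) = x * (ln x - ln X) + y * (ln y - ln Y)"
    using xp yp Xp Yp by (simp add: ln_div)
  ultimately show ?thesis using i1 i2 sum0 unfolding S_def[symmetric] T_def[symmetric]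
    by (simp add: algebra_simps)
qed


definition Hs :: "'b set \<Rightarrow> ('b \<Rightarrow> real) \<Rightarrow> real" where
  "Hs S x = - (\<Sum>a\<in>S. x a * ln (x a / sum x S))"

lemma Hs_nonneg:
  assumes "finite S" "\<And>a. a \<in> S \<Longrightarrow> 0 \<le> x a"
  shows "0 \<le> Hs S x"
proof -
  have "x a * ln (x a / sum x S) \<le> 0" if a: "a \<in> S" for a
  proof (cases "x a = 0")
    case False
    hence xp: "x a > 0" using assms a by force
    have le: "x a \<le> sum x S" using assms a by (intro member_le_sum) auto
    hence "x a / sum x S \<le> 1" using xp by auto
    hence "ln (x a / sum x S) \<le> 0" using xp le by (subst ln_le_zero_iff) auto
    thus ?thesis using xp by (simp add: mult_nonneg_nonpos)
  qed simp
  hence "(\<Sum>a\<in>S. x a * ln (x a / sum x S)) \<le> 0" by (intro sum_nonpos) auto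
  thus ?thesis unfolding Hs_def by simp
qed

lemma Hs_superadd:
  assumes "finite S" "\<And>a. a \<in> S \<Longrightarrow> 0 \<le> x a" "\<And>a. a \<in> S \<Longrightarrow> 0 \<le> y a"
  shows "Hs S x + Hs S y \<le> Hs S (\<lambda>a. x a + y a)"
proof -
  have "(x a + y a) * ln ((x a + y a) / (sum x S + sum y S))
        \<le> x a * ln (x a / sum x S) + y a * ln (y a / sum y S)" if a: "a \<in> S" for a
    using assms a by (intro logsum2 member_le_sum) auto
  hence "(\<Sum>a\<in>S. (x a + y a) * ln ((x a + y a) / (sum x S + sum y S)))
        \<le> (\<Sum>a\<in>S. x a * ln (x a / sum x S) + y a * ln (y a / sum y S))"
    by (intro sum_mono) auto
  thus ?thesis unfolding Hs_def by (simp add: sum.distrib)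
qed

lemma Hs_sum:
  fixes M :: nat
  assumes "finite S" "\<And>n a. a \<in> S \<Longrightarrow> 0 \<le> p n a"
  shows "(\<Sum>n<M. Hs S (p n)) \<le> Hs S (\<lambda>a. \<Sum>n<M. p n a)"
proof (induction M)
  case 0
  then show ?case by (simp add: Hs_def)
next
  case (Suc M)
  have "(\<Sum>n<Suc M. Hs S (p n)) = (\<Sum>n<M. Hs S (p n)) + Hs S (p M)" by simp
  also have "\<dots> \<le> Hs S (\<lambda>a. \<Sum>n<M. p n a) + Hs S (p M)" using Suc by simp
  also have "\<dots> \<le> Hs S (\<lambda>a. (\<Sum>n<M. p n a) + p M a)"
    using assms by (intro Hs_superadd) (auto intro: sum_nonneg)
  finally show ?case by simp
qed

lemma Hs_mono:
  assumes "finite S" "\<And>a. a \<in> S \<Longrightarrow> 0 \<le> x a" "\<And>a. a \<in> S \<Longrightarrow> x a \<le> y a"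
  shows "Hs S x \<le> Hs S y"
proof -
  have "Hs S x + Hs S (\<lambda>a. y a - x a) \<le> Hs S (\<lambda>a. x a + (y a - x a))"
    using assms by (intro Hs_superadd) auto
  moreover have "0 \<le> Hs S (\<lambda>a. y a - x a)" using assms by (intro Hs_nonneg) auto
  ultimately show ?thesis by simp
qed


lemma sum_PiE_pair:
  fixes h :: "'i \<Rightarrow> 'x \<Rightarrow> 'y \<Rightarrow> real"
  assumes "finite I" "\<And>i. i \<in> I \<Longrightarrow> finite (A i)" "\<And>i. i \<in> I \<Longrightarrow> finite (B i)"
  shows "(\<Sum>f\<in>PiE I A. \<Sum>g\<in>PiE I B. \<Prod>j\<in>I. h j (f j) (g j))
       = (\<Prod>j\<in>I. \<Sum>x\<in>A j. \<Sum>y\<in>B j. h j x y)"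
proof -
  have "(\<Prod>j\<in>I. \<Sum>x\<in>A j. \<Sum>y\<in>B j. h j x y) = (\<Prod>j\<in>I. \<Sum>p\<in>A j \<times> B j. h j (fst p) (snd p))"
    by (intro prod.cong refl) (simp add: sum.cartesian_product case_prod_beta)
  also have "\<dots> = (\<Sum>F\<in>PiE I (\<lambda>j. A j \<times> B j). \<Prod>j\<in>I. h j (fst (F j)) (snd (F j)))"
    using assms by (intro prod_sum_PiE) auto
  also have "\<dots> = (\<Sum>fg\<in>PiE I A \<times> PiE I B. \<Prod>j\<in>I. h j (fst fg j) (snd fg j))"
    by (rule sum.reindex_bij_witness[where i = "\<lambda>fg. restrict (\<lambda>j. (fst fg j, snd fg j)) I"
          and j = "\<lambda>F. (restrict (\<lambda>j. fst (F j)) I, restrict (\<lambda>j. snd (F j)) I)"])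
       (auto simp: PiE_iff extensional_def fun_eq_iff)
  also have "\<dots> = (\<Sum>f\<in>PiE I A. \<Sum>g\<in>PiE I B. \<Prod>j\<in>I. h j (f j) (g j))"
    by (simp add: sum.cartesian_product case_prod_beta)
  finally show ?thesis by simp
qed

lemma restrict_set_eq:
  assumes "c \<subseteq> I" "g \<in> PiE c X"
  shows "{f\<in>PiE I X. restrict f c = g} = PiE I (\<lambda>j. if j \<in> c then {g j} else X j)"
  using assms by (auto simp: PiE_iff extensional_def fun_eq_iff restrict_def split: if_splits) 


locale mg =
  fixes N :: nat and Ob :: "nat \<Rightarrow> 'o set" and Lc :: "nat \<Rightarrow> 'l set" and Ac :: "nat \<Rightarrow> 'a set"
    and Pt :: "nat \<Rightarrow> 'o \<times> 'l \<Rightarrow> 'a \<Rightarrow> ('o \<times> 'l) pmf"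
    and sinit :: "('o,'l) jstate" and T :: "('o,'l) jstate set"
    and pia :: "('o,'l) jstate \<Rightarrow> (nat \<Rightarrow> 'a) pmf"
  assumes fin: "\<forall>i\<in>agents N. finite (Ob i) \<and> finite (Lc i) \<and> finite (Ac i)"
    and trans_wf: "\<forall>i\<in>agents N. \<forall>x\<in>Ob i \<times> Lc i. \<forall>b\<in>Ac i. set_pmf (Pt i x b) \<subseteq> Ob i \<times> Lc i"
    and pia_wf: "\<forall>s\<in>jstates N Ob Lc. set_pmf (pia s) \<subseteq> jacts N Ac"
    and occ_fin: "\<forall>s\<in>jstates N Ob Lc - T. \<forall>a\<in>jacts N Ac.
          summable (\<lambda>n. occ N Ob Lc Ac Pt sinit T pia n s a)"
begin

abbreviation "pa \<equiv> palpha N Ob Lc Ac Pt sinit T pia"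

definition "Lset c lc = {l\<in>PiE (agents N) Lc. restrict l c = lc}"
definition "Aset c ac = {a\<in>jacts N Ac. restrict a c = ac}"

definition "pA c n u lc ac = (\<Sum>l\<in>Lset c lc. \<Sum>a\<in>Aset c ac. pa n (u,l) * pmf (pia (u,l)) a)"

definition "Ent c u lc ac = - (\<Sum>o1c\<in>PiE c Ob. \<Sum>l1c\<in>PiE c Lc.
   Pcoal Pt c (u,lc) ac (o1c,l1c) * ln (Pcoal Pt c (u,lc) ac (o1c,l1c)))"

lemma fin_ag: "finite (agents N)" by (simp add: agents_def)

lemma finPi:
  assumes "c \<subseteq> agents N"
  shows "finite (PiE c Ob)" "finite (PiE c Lc)" "finite (PiE c Ac)"
  using assms fin fin_ag by (auto intro!: finite_PiE dest: finite_subset)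

lemma fin_jacts: "finite (jacts N Ac)" and fin_jstates: "finite (jstates N Ob Lc)"
  using finPi[OF order.refl] by (auto simp: jacts_def jstates_def)

lemma fin_Lset: "finite (Lset c lc)" and fin_Aset: "finite (Aset c ac)"
  using finPi[OF order.refl] fin_jacts by (auto simp: Lset_def Aset_def)

lemma pa_nonneg: "0 \<le> pa n s"
proof (induction n arbitrary: s)
  case (Suc n)
  then show ?case
    by (auto intro!: sum_nonneg mult_nonneg_nonneg simp: jtrans_def Pcoal_def prod_nonneg)
qed simp

lemma pa_T: "s \<in> T \<Longrightarrow> pa n s = 0"
  by (cases n) auto

lemma Pcoal_nonneg: "0 \<le> Pcoal Pt c s a s1"
  by (simp add: Pcoal_def prod_nonneg)

lemma Pcoal_le1: "Pcoal Pt c s a s1 \<le> 1"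
  unfolding Pcoal_def by (intro prod_le_1) (auto simp: pmf_le_1)

lemma pmf_pair_sum1:
  assumes "j \<in> agents N" "x \<in> Ob j" "y \<in> Lc j" "b \<in> Ac j"
  shows "(\<Sum>o1\<in>Ob j. \<Sum>l1\<in>Lc j. pmf (Pt j (x,y) b) (o1,l1)) = 1"
proof -
  have "(\<Sum>o1\<in>Ob j. \<Sum>l1\<in>Lc j. pmf (Pt j (x,y) b) (o1,l1)) = (\<Sum>p\<in>Ob j \<times> Lc j. pmf (Pt j (x,y) b) p)"
    by (simp add: sum.cartesian_product)
  also have "\<dots> = 1" using assms fin trans_wf by (intro sum_pmf_eq_1) auto
  finally show ?thesis .
qed

lemma Pcoal_sum1:
  assumes c: "c \<subseteq> agents N" and u: "\<forall>j\<in>c. u j \<in> Ob j" and lc: "\<forall>j\<in>c. lc j \<in> Lc j"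
    and ac: "\<forall>j\<in>c. ac j \<in> Ac j"
  shows "(\<Sum>o1c\<in>PiE c Ob. \<Sum>l1c\<in>PiE c Lc. Pcoal Pt c (u,lc) ac (o1c,l1c)) = 1"
proof -
  have fc: "finite c" using c fin_ag finite_subset by blast
  have "(\<Sum>o1c\<in>PiE c Ob. \<Sum>l1c\<in>PiE c Lc. Pcoal Pt c (u,lc) ac (o1c,l1c))
     = (\<Prod>j\<in>c. \<Sum>x\<in>Ob j. \<Sum>y\<in>Lc j. pmf (Pt j (u j, lc j) (ac j)) (x,y))"
    unfolding Pcoal_def using fc c fin
    by (subst sum_PiE_pair[symmetric]) auto
  also have "\<dots> = 1" using c u lc ac by (intro prod.neutral ballI pmf_pair_sum1) auto
  finally show ?thesis .
qed


lemma jtrans_restr_sum: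
  assumes c: "c \<subseteq> agents N" and u: "u \<in> PiE (agents N) Ob" and l: "l \<in> PiE (agents N) Lc"
    and a: "a \<in> jacts N Ac" and o1c: "o1c \<in> PiE c Ob" and l1c: "l1c \<in> PiE c Lc"
  shows "(\<Sum>s1\<in>{s1\<in>jstates N Ob Lc. restrict (fst s1) c = o1c \<and> restrict (snd s1) c = l1c}.
            jtrans N Pt (u,l) a s1) = Pcoal Pt c (u,l) a (o1c,l1c)"
proof -
  define Ob' where "Ob' = (\<lambda>j. if j \<in> c then {o1c j} else Ob j)"
  define Lc' where "Lc' = (\<lambda>j. if j \<in> c then {l1c j} else Lc j)"
  have seteq: "{s1\<in>jstates N Ob Lc. restrict (fst s1) c = o1c \<and> restrict (snd s1) c = l1c}
      = {f\<in>PiE (agents N) Ob. restrict f c = o1c} \<times> {g\<in>PiE (agents N) Lc. restrict g c = l1c}"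
    by (auto simp: jstates_def)
  also have "\<dots> = PiE (agents N) Ob' \<times> PiE (agents N) Lc'"
    unfolding Ob'_def Lc'_def using c o1c l1c by (simp add: restrict_set_eq)
  finally have seteq': "{s1\<in>jstates N Ob Lc. restrict (fst s1) c = o1c \<and> restrict (snd s1) c = l1c}
      = PiE (agents N) Ob' \<times> PiE (agents N) Lc'" .
  have "(\<Sum>s1\<in>{s1\<in>jstates N Ob Lc. restrict (fst s1) c = o1c \<and> restrict (snd s1) c = l1c}.
            jtrans N Pt (u,l) a s1)
     = (\<Sum>f\<in>PiE (agents N) Ob'. \<Sum>g\<in>PiE (agents N) Lc'.
          \<Prod>j\<in>agents N. pmf (Pt j (u j, l j) (a j)) (f j, g j))"
    unfolding seteq' by (simp add: sum.cartesian_product jtrans_def Pcoal_def case_prod_beta)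
  also have "\<dots> = (\<Prod>j\<in>agents N. \<Sum>x\<in>Ob' j. \<Sum>y\<in>Lc' j. pmf (Pt j (u j, l j) (a j)) (x, y))"
    using fin_ag fin by (intro sum_PiE_pair) (auto simp: Ob'_def Lc'_def)
  also have "\<dots> = (\<Prod>j\<in>agents N. if j \<in> c then pmf (Pt j (u j, l j) (a j)) (o1c j, l1c j) else 1)"
  proof (intro prod.cong refl)
    fix j assume j: "j \<in> agents N"
    show "(\<Sum>x\<in>Ob' j. \<Sum>y\<in>Lc' j. pmf (Pt j (u j, l j) (a j)) (x, y))
        = (if j \<in> c then pmf (Pt j (u j, l j) (a j)) (o1c j, l1c j) else 1)"
    proof (cases "j \<in> c")
      case False
      then show ?thesis using j u l a unfolding Ob'_def Lc'_def
        by (simp add: pmf_pair_sum1 PiE_iff jacts_def)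
    qed (simp add: Ob'_def Lc'_def)
  qed
  also have "\<dots> = (\<Prod>j\<in>c. pmf (Pt j (u j, l j) (a j)) (o1c j, l1c j))"
    using fin_ag c by (subst prod.If_cases) (auto simp: Int_absorb1 Int_def intro!: prod.cong)
  finally show ?thesis by (simp add: Pcoal_def)
qed


lemma Pcoal_restr:
  assumes "restrict l c = lc" "restrict a c = ac"
  shows "Pcoal Pt c (u,l) a s1 = Pcoal Pt c (u,lc) ac s1"
  unfolding Pcoal_def using assms by (intro prod.cong refl) auto

lemma pnum_eq:
  assumes c: "c \<subseteq> agents N" and u: "u \<in> PiE (agents N) Ob"
    and o1c: "o1c \<in> PiE c Ob" and l1c: "l1c \<in> PiE c Lc"
  shows "pnum N Ob Lc Ac Pt sinit T pia c n u lc ac o1c l1c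
       = pA c n u lc ac * Pcoal Pt c (u,lc) ac (o1c,l1c)"
proof -
  have "pnum N Ob Lc Ac Pt sinit T pia c n u lc ac o1c l1c
      = (\<Sum>l\<in>Lset c lc. \<Sum>a\<in>Aset c ac. pa n (u,l) * pmf (pia (u,l)) a *
          (\<Sum>s1\<in>{s1\<in>jstates N Ob Lc. restrict (fst s1) c = o1c \<and> restrict (snd s1) c = l1c}.
            jtrans N Pt (u,l) a s1))"
    unfolding pnum_def pjoint_def Lset_def Aset_def by (simp add: sum_distrib_left)
  also have "\<dots> = (\<Sum>l\<in>Lset c lc. \<Sum>a\<in>Aset c ac. pa n (u,l) * pmf (pia (u,l)) a *
          Pcoal Pt c (u,lc) ac (o1c,l1c))"
  proof (intro sum.cong refl)
    fix l a assume l: "l \<in> Lset c lc" and a: "a \<in> Aset c ac"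
    show "pa n (u,l) * pmf (pia (u,l)) a *
          (\<Sum>s1\<in>{s1\<in>jstates N Ob Lc. restrict (fst s1) c = o1c \<and> restrict (snd s1) c = l1c}.
            jtrans N Pt (u,l) a s1) = pa n (u,l) * pmf (pia (u,l)) a * Pcoal Pt c (u,lc) ac (o1c,l1c)"
      using l a c u o1c l1c
      by (subst jtrans_restr_sum) (auto simp: Lset_def Aset_def intro!: Pcoal_restr)
  qed
  also have "\<dots> = pA c n u lc ac * Pcoal Pt c (u,lc) ac (o1c,l1c)"
    unfolding pA_def by (simp add: sum_distrib_right)
  finally show ?thesis .
qed

lemma restrict_jacts: "c \<subseteq> agents N \<Longrightarrow> a \<in> jacts N Ac \<Longrightarrow> restrict a c \<in> PiE c Ac"
  by (auto simp: jacts_def PiE_iff)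

lemma pden_eq:
  assumes c: "c \<subseteq> agents N" and u: "u \<in> PiE (agents N) Ob"
  shows "pden N Ob Lc Ac Pt sinit T pia c n u lc = (\<Sum>ac\<in>PiE c Ac. pA c n u lc ac)"
proof -
  have "(\<Sum>ac\<in>PiE c Ac. pA c n u lc ac)
     = (\<Sum>l\<in>Lset c lc. \<Sum>ac\<in>PiE c Ac. \<Sum>a\<in>Aset c ac. pa n (u,l) * pmf (pia (u,l)) a)"
    unfolding pA_def by (rule sum.swap)
  also have "\<dots> = (\<Sum>l\<in>Lset c lc. \<Sum>a\<in>jacts N Ac. pa n (u,l) * pmf (pia (u,l)) a)"
    unfolding Aset_def
    apply (rule sum.cong[OF refl])
    apply (rule sum.group)
    using fin_jacts finPi(3)[OF c] restrict_jacts[OF c] by blast+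
  also have "\<dots> = (\<Sum>l\<in>Lset c lc. pa n (u,l))"
  proof (intro sum.cong refl)
    fix l assume l: "l \<in> Lset c lc"
    have "(\<Sum>a\<in>jacts N Ac. pmf (pia (u,l)) a) = 1"
      using l u pia_wf fin_jacts by (intro sum_pmf_eq_1) (auto simp: Lset_def jstates_def)
    thus "(\<Sum>a\<in>jacts N Ac. pa n (u,l) * pmf (pia (u,l)) a) = pa n (u,l)"
      by (simp add: sum_distrib_left[symmetric])
  qed
  finally show ?thesis unfolding pden_def Lset_def by simp
qed


lemma pA_nonneg: "0 \<le> pA c n u lc ac"
  unfolding pA_def by (intro sum_nonneg mult_nonneg_nonneg pa_nonneg pmf_nonneg)

lemma Ent_nonneg: "0 \<le> Ent c u lc ac"
proof -
  have "Pcoal Pt c (u,lc) ac (o1c,l1c) * ln (Pcoal Pt c (u,lc) ac (o1c,l1c)) \<le> 0" for o1c l1c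
  proof (cases "Pcoal Pt c (u,lc) ac (o1c,l1c) = 0")
    case False
    hence "Pcoal Pt c (u,lc) ac (o1c,l1c) > 0" using Pcoal_nonneg by (simp add: order_less_le)
    moreover have "ln (Pcoal Pt c (u,lc) ac (o1c,l1c)) \<le> 0"
      using calculation Pcoal_le1 by (subst ln_le_zero_iff) auto
    ultimately show ?thesis by (simp add: mult_nonneg_nonpos)
  qed simp
  thus ?thesis unfolding Ent_def by (simp add: sum_nonpos)
qed

lemma term_split:
  fixes p P D :: real
  assumes "0 \<le> p" "0 \<le> P" "0 < D"
  shows "D * (p * P / D * ln (p * P / D)) = p * ln (p / D) * P + p * (P * ln P)"
proof (cases "p = 0 \<or> P = 0")
  case False
  hence pp: "p > 0" "P > 0" using assms by auto
  have "ln (p * P / D) = ln ((p / D) * P)" by simp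
  also have "\<dots> = ln (p / D) + ln P" using pp assms by (intro ln_mult_pos) auto
  finally have "ln (p * P / D) = ln (p / D) + ln P" .
  thus ?thesis using assms by (simp add: field_simps)
qed auto

lemma key:
  assumes c: "c \<subseteq> agents N" and u: "u \<in> PiE (agents N) Ob" and lc: "lc \<in> PiE c Lc"
  shows "pden N Ob Lc Ac Pt sinit T pia c n u lc * qentropy N Ob Lc Ac Pt sinit T pia c n u lc
       = Hs (PiE c Ac) (pA c n u lc) + (\<Sum>ac\<in>PiE c Ac. pA c n u lc ac * Ent c u lc ac)"
proof -
  define D where "D = pden N Ob Lc Ac Pt sinit T pia c n u lc"
  define p where "p = pA c n u lc"
  define P where "P = (\<lambda>ac o1c l1c. Pcoal Pt c (u,lc) ac (o1c,l1c))"
  have Dsum: "D = sum p (PiE c Ac)" unfolding D_def p_def using pden_eq[OF c u] .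
  have pnn: "\<And>ac. 0 \<le> p ac" unfolding p_def by (rule pA_nonneg)
  have q: "qcond N Ob Lc Ac Pt sinit T pia c n u lc ac o1c l1c = p ac * P ac o1c l1c / D"
    if "o1c \<in> PiE c Ob" "l1c \<in> PiE c Lc" for ac o1c l1c
    unfolding qcond_def D_def p_def P_def using pnum_eq[OF c u that] by simp
  have qe: "qentropy N Ob Lc Ac Pt sinit T pia c n u lc
     = - (\<Sum>ac\<in>PiE c Ac. \<Sum>o1c\<in>PiE c Ob. \<Sum>l1c\<in>PiE c Lc.
          p ac * P ac o1c l1c / D * ln (p ac * P ac o1c l1c / D))"
    unfolding qentropy_def by (intro arg_cong[where f=uminus] sum.cong refl) (simp add: q)
  show ?thesis
  proof (cases "D = 0")
    case True
    hence "\<forall>ac\<in>PiE c Ac. p ac = 0" using Dsum pnn finPi[OF c] by (simp add: sum_nonneg_eq_0_iff)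
    thus ?thesis using True unfolding D_def[symmetric] p_def[symmetric] Hs_def by simp
  next
    case False
    hence Dp: "D > 0" using Dsum pnn by (metis order_less_le sum_nonneg)
    have "D * qentropy N Ob Lc Ac Pt sinit T pia c n u lc
       = - (\<Sum>ac\<in>PiE c Ac. \<Sum>o1c\<in>PiE c Ob. \<Sum>l1c\<in>PiE c Lc.
          D * (p ac * P ac o1c l1c / D * ln (p ac * P ac o1c l1c / D)))"
      unfolding qe by (simp add: sum_distrib_left)
    also have "\<dots> = - (\<Sum>ac\<in>PiE c Ac. \<Sum>o1c\<in>PiE c Ob. \<Sum>l1c\<in>PiE c Lc.
          p ac * ln (p ac / D) * P ac o1c l1c + p ac * (P ac o1c l1c * ln (P ac o1c l1c)))"
      using pnn Dp unfolding P_def by (intro arg_cong[where f=uminus] sum.cong refl term_split Pcoal_nonneg)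
    also have "\<dots> = - (\<Sum>ac\<in>PiE c Ac. p ac * ln (p ac / D) *
           (\<Sum>o1c\<in>PiE c Ob. \<Sum>l1c\<in>PiE c Lc. P ac o1c l1c)
          + p ac * (\<Sum>o1c\<in>PiE c Ob. \<Sum>l1c\<in>PiE c Lc. P ac o1c l1c * ln (P ac o1c l1c)))"
      by (simp add: sum.distrib sum_distrib_left)
    also have "\<dots> = - (\<Sum>ac\<in>PiE c Ac. p ac * ln (p ac / D) - p ac * Ent c u lc ac)"
    proof (intro arg_cong[where f=uminus] sum.cong refl)
      fix ac assume ac: "ac \<in> PiE c Ac"
      have "(\<Sum>o1c\<in>PiE c Ob. \<Sum>l1c\<in>PiE c Lc. P ac o1c l1c) = 1"
        unfolding P_def using c u lc ac by (intro Pcoal_sum1) (auto simp: PiE_iff)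
      thus "p ac * ln (p ac / D) * (\<Sum>o1c\<in>PiE c Ob. \<Sum>l1c\<in>PiE c Lc. P ac o1c l1c)
          + p ac * (\<Sum>o1c\<in>PiE c Ob. \<Sum>l1c\<in>PiE c Lc. P ac o1c l1c * ln (P ac o1c l1c))
          = p ac * ln (p ac / D) - p ac * Ent c u lc ac"
        unfolding Ent_def P_def by simp
    qed
    also have "\<dots> = Hs (PiE c Ac) p + (\<Sum>ac\<in>PiE c Ac. p ac * Ent c u lc ac)"
      unfolding Hs_def Dsum[symmetric] by (simp add: sum_subtractf)
    finally show ?thesis unfolding D_def p_def .
  qed
qed


lemma occ_summ:
  assumes u: "u \<in> PiE (agents N) Ob" and l: "l \<in> PiE (agents N) Lc" and a: "a \<in> jacts N Ac"
  shows "summable (\<lambda>n. occ N Ob Lc Ac Pt sinit T pia n (u,l) a)"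
proof (cases "(u,l) \<in> T")
  case True
  then show ?thesis by (simp add: occ_def pa_T)
next
  case False
  then show ?thesis using occ_fin u l a by (auto simp: jstates_def)
qed

lemma occ_marg_eq:
  assumes c: "c \<subseteq> agents N" and u: "u \<in> PiE (agents N) Ob"
  shows "summable (\<lambda>n. pA c n u lc ac)"
    and "occ_marg N Ob Lc Ac Pt sinit T pia c u lc ac = (\<Sum>n. pA c n u lc ac)"
proof -
  have pAo: "pA c n u lc ac = (\<Sum>l\<in>Lset c lc. \<Sum>a\<in>Aset c ac. occ N Ob Lc Ac Pt sinit T pia n (u,l) a)" for n
    unfolding pA_def occ_def by simp
  have sm: "summable (\<lambda>n. occ N Ob Lc Ac Pt sinit T pia n (u,l) a)"
    if "l \<in> Lset c lc" "a \<in> Aset c ac" for l a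
    using that u by (intro occ_summ) (auto simp: Lset_def Aset_def)
  show "summable (\<lambda>n. pA c n u lc ac)"
    unfolding pAo using sm by (intro summable_sum) auto
  have "occ_marg N Ob Lc Ac Pt sinit T pia c u lc ac
      = (\<Sum>l\<in>{l\<in>Lset c lc. (u,l) \<notin> T}. \<Sum>a\<in>Aset c ac. occupancy N Ob Lc Ac Pt sinit T pia (u,l) a)"
    unfolding occ_marg_def Lset_def Aset_def by (simp add: conj_assoc)
  also have "\<dots> = (\<Sum>l\<in>Lset c lc. \<Sum>a\<in>Aset c ac. occupancy N Ob Lc Ac Pt sinit T pia (u,l) a)"
    using fin_Lset by (intro sum.mono_neutral_left) (auto simp: occupancy_def occ_def pa_T)
  also have "\<dots> = (\<Sum>l\<in>Lset c lc. \<Sum>n. \<Sum>a\<in>Aset c ac. occ N Ob Lc Ac Pt sinit T pia n (u,l) a)"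
    unfolding occupancy_def using sm by (intro sum.cong refl suminf_sum[symmetric]) auto
  also have "\<dots> = (\<Sum>n. \<Sum>l\<in>Lset c lc. \<Sum>a\<in>Aset c ac. occ N Ob Lc Ac Pt sinit T pia n (u,l) a)"
    using sm by (intro suminf_sum[symmetric] summable_sum) auto
  finally show "occ_marg N Ob Lc Ac Pt sinit T pia c u lc ac = (\<Sum>n. pA c n u lc ac)"
    unfolding pAo .
qed


lemma main:
  assumes c: "c \<subseteq> agents N" and w: "\<And>u. 0 \<le> w u"
  shows "Gval N Ob Lc Ac Pt sinit T pia c w \<le> ennreal (Gbar N Ob Lc Ac Pt sinit T pia c w)"
proof -
  define U where "U = PiE (agents N) Ob"
  define LC where "LC = PiE c Lc"
  define AC where "AC = PiE c Ac"
  define nu where "nu = (\<lambda>u lc ac. occ_marg N Ob Lc Ac Pt sinit T pia c u lc ac)"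
  define inner where "inner = (\<lambda>n. \<Sum>u\<in>U. \<Sum>lc\<in>LC.
        w u * pden N Ob Lc Ac Pt sinit T pia c n u lc * qentropy N Ob Lc Ac Pt sinit T pia c n u lc)"
  have fU: "finite U" and fLC: "finite LC" and fAC: "finite AC"
    unfolding U_def LC_def AC_def using finPi[OF c] finPi[OF order.refl] by auto
  have inner_eq: "inner n = (\<Sum>u\<in>U. \<Sum>lc\<in>LC. w u * (Hs AC (pA c n u lc)
        + (\<Sum>ac\<in>AC. pA c n u lc ac * Ent c u lc ac)))" for n
    unfolding inner_def
  proof (intro sum.cong refl)
    fix u lc assume "u \<in> U" "lc \<in> LC"
    thus "w u * pden N Ob Lc Ac Pt sinit T pia c n u lc * qentropy N Ob Lc Ac Pt sinit T pia c n u lc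
       = w u * (Hs AC (pA c n u lc) + (\<Sum>ac\<in>AC. pA c n u lc ac * Ent c u lc ac))"
      using key[OF c] unfolding U_def LC_def AC_def by (simp add: mult.assoc)
  qed
  have inner_nn: "0 \<le> inner n" for n
    unfolding inner_eq using w fAC
    by (intro sum_nonneg mult_nonneg_nonneg add_nonneg_nonneg Hs_nonneg pA_nonneg Ent_nonneg) auto
  have Gbar_eq: "Gbar N Ob Lc Ac Pt sinit T pia c w
      = (\<Sum>u\<in>U. \<Sum>lc\<in>LC. w u * (Hs AC (nu u lc) + (\<Sum>ac\<in>AC. nu u lc ac * Ent c u lc ac)))"
  proof -
    have "w u * (Hs AC (nu u lc) + (\<Sum>ac\<in>AC. nu u lc ac * Ent c u lc ac))
      = - (\<Sum>ac\<in>AC. nu u lc ac * w u * ln (nu u lc ac / (\<Sum>bc\<in>AC. nu u lc bc)))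
        - (\<Sum>ac\<in>AC. \<Sum>o1c\<in>PiE c Ob. \<Sum>l1c\<in>PiE c Lc.
          nu u lc ac * w u * Pcoal Pt c (u,lc) ac (o1c,l1c) * ln (Pcoal Pt c (u,lc) ac (o1c,l1c)))"
      for u lc
      unfolding Hs_def Ent_def
      by (simp add: sum_distrib_left sum_negf algebra_simps)
    hence "(\<Sum>u\<in>U. \<Sum>lc\<in>LC. w u * (Hs AC (nu u lc) + (\<Sum>ac\<in>AC. nu u lc ac * Ent c u lc ac)))
      = (\<Sum>u\<in>U. \<Sum>lc\<in>LC. - (\<Sum>ac\<in>AC. nu u lc ac * w u * ln (nu u lc ac / (\<Sum>bc\<in>AC. nu u lc bc)))
        - (\<Sum>ac\<in>AC. \<Sum>o1c\<in>PiE c Ob. \<Sum>l1c\<in>PiE c Lc.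
          nu u lc ac * w u * Pcoal Pt c (u,lc) ac (o1c,l1c) * ln (Pcoal Pt c (u,lc) ac (o1c,l1c))))"
      by simp
    also have "\<dots> = Gbar N Ob Lc Ac Pt sinit T pia c w"
      unfolding Gbar_def U_def LC_def AC_def nu_def by (simp add: sum_subtractf sum_negf)
    finally show ?thesis by simp
  qed
  have partial: "(\<Sum>n<M. inner n) \<le> Gbar N Ob Lc Ac Pt sinit T pia c w" for M
  proof -
    have "(\<Sum>n<M. inner n) = (\<Sum>u\<in>U. \<Sum>lc\<in>LC. w u * ((\<Sum>n<M. Hs AC (pA c n u lc))
        + (\<Sum>ac\<in>AC. (\<Sum>n<M. pA c n u lc ac) * Ent c u lc ac)))"
    proof -
      have "(\<Sum>n<M. inner n) = (\<Sum>u\<in>U. \<Sum>lc\<in>LC. \<Sum>n<M. w u * (Hs AC (pA c n u lc)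
        + (\<Sum>ac\<in>AC. pA c n u lc ac * Ent c u lc ac)))"
        unfolding inner_eq by (rule trans[OF sum.swap], intro sum.cong refl, rule sum.swap)
      also have "\<dots> = (\<Sum>u\<in>U. \<Sum>lc\<in>LC. w u * ((\<Sum>n<M. Hs AC (pA c n u lc))
        + (\<Sum>ac\<in>AC. (\<Sum>n<M. pA c n u lc ac) * Ent c u lc ac)))"
      proof (intro sum.cong refl)
        fix u lc
        have "(\<Sum>n<M. \<Sum>ac\<in>AC. pA c n u lc ac * Ent c u lc ac)
            = (\<Sum>ac\<in>AC. (\<Sum>n<M. pA c n u lc ac) * Ent c u lc ac)"
          by (subst sum.swap) (simp add: sum_distrib_right)
        thus "(\<Sum>n<M. w u * (Hs AC (pA c n u lc) + (\<Sum>ac\<in>AC. pA c n u lc ac * Ent c u lc ac)))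
          = w u * ((\<Sum>n<M. Hs AC (pA c n u lc)) + (\<Sum>ac\<in>AC. (\<Sum>n<M. pA c n u lc ac) * Ent c u lc ac))"
          by (simp add: sum_distrib_left[symmetric] sum.distrib)
      qed
      finally show ?thesis .
    qed
    also have "\<dots> \<le> (\<Sum>u\<in>U. \<Sum>lc\<in>LC. w u * (Hs AC (nu u lc) + (\<Sum>ac\<in>AC. nu u lc ac * Ent c u lc ac)))"
    proof (intro sum_mono mult_left_mono w add_mono)
      fix u lc assume u: "u \<in> U" and lc: "lc \<in> LC"
      have le: "(\<Sum>n<M. pA c n u lc ac) \<le> nu u lc ac" for ac
        unfolding nu_def using occ_marg_eq[OF c, of u lc ac] u U_def
        by (auto intro!: sum_le_suminf pA_nonneg)
      have "(\<Sum>n<M. Hs AC (pA c n u lc)) \<le> Hs AC (\<lambda>ac. \<Sum>n<M. pA c n u lc ac)"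
        using fAC by (intro Hs_sum pA_nonneg)
      also have "\<dots> \<le> Hs AC (nu u lc)"
        using fAC le by (intro Hs_mono sum_nonneg pA_nonneg) auto
      finally show "(\<Sum>n<M. Hs AC (pA c n u lc)) \<le> Hs AC (nu u lc)" .
      fix ac
      show "(\<Sum>n<M. pA c n u lc ac) * Ent c u lc ac \<le> nu u lc ac * Ent c u lc ac"
        using le Ent_nonneg by (intro mult_right_mono)
    qed
    finally show ?thesis unfolding Gbar_eq .
  qed
  have "Gval N Ob Lc Ac Pt sinit T pia c w = (\<Sum>n. ennreal (inner n))"
    unfolding Gval_def inner_def U_def LC_def by simp
  also have "\<dots> \<le> ennreal (Gbar N Ob Lc Ac Pt sinit T pia c w)"
  proof (intro suminf_le_const[OF summableI])
    fix M
    have "(\<Sum>n<M. ennreal (inner n)) = ennreal (\<Sum>n<M. inner n)"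
      using inner_nn by simp
    thus "(\<Sum>n<M. ennreal (inner n)) \<le> ennreal (Gbar N Ob Lc Ac Pt sinit T pia c w)"
      using partial by (simp add: ennreal_leI)
  qed
  finally show ?thesis .
qed

end

theorem proposition2:
  fixes N K :: nat
    and Ob :: "nat \<Rightarrow> 'o set" and Lc :: "nat \<Rightarrow> 'l set" and Ac :: "nat \<Rightarrow> 'a set"
    and Pt :: "nat \<Rightarrow> 'o \<times> 'l \<Rightarrow> 'a \<Rightarrow> ('o \<times> 'l) pmf"
    and sinit :: "('o,'l) jstate"
    and Starget Savoid :: "('o,'l) jstate set"
    and pic :: "(nat \<Rightarrow> 'o) \<Rightarrow> nat set pmf"
    and pia :: "('o,'l) jstate \<Rightarrow> (nat \<Rightarrow> 'a) pmf"
  assumes N_pos: "N \<ge> 1"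
    and fin: "\<forall>i\<in>agents N. finite (Ob i) \<and> finite (Lc i) \<and> finite (Ac i)"
    and trans_wf: "\<forall>i\<in>agents N. \<forall>x\<in>Ob i \<times> Lc i. \<forall>b\<in>Ac i. set_pmf (Pt i x b) \<subseteq> Ob i \<times> Lc i"
    and init: "sinit \<in> jstates N Ob Lc"
    and K_le: "K \<le> N"
    and tgt: "Starget \<subseteq> jstates N Ob Lc" and avd: "Savoid \<subseteq> jstates N Ob Lc"
    and disj: "Starget \<inter> Savoid = {}"
    and pic_wf: "\<forall>u\<in>PiE (agents N) Ob. set_pmf (pic u) \<subseteq> Acomm N K"
    and pia_wf: "\<forall>s\<in>jstates N Ob Lc. set_pmf (pia s) \<subseteq> jacts N Ac"
    and occ_finite: "\<forall>s\<in>jstates N Ob Lc - (Starget \<union> Savoid). \<forall>a\<in>jacts N Ac.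
          summable (\<lambda>n. occ N Ob Lc Ac Pt sinit (Starget \<union> Savoid) pia n s a)"
  shows "(\<forall>i\<in>agents N.
            Gval N Ob Lc Ac Pt sinit (Starget \<union> Savoid) pia {i} (\<lambda>u. wprime N K pic u i)
            \<le> ennreal (Gbar N Ob Lc Ac Pt sinit (Starget \<union> Savoid) pia {i} (\<lambda>u. wprime N K pic u i)))
       \<and> (\<forall>c\<in>Acomm N K.
            Gval N Ob Lc Ac Pt sinit (Starget \<union> Savoid) pia c (\<lambda>u. wdprime pic u c)
            \<le> ennreal (Gbar N Ob Lc Ac Pt sinit (Starget \<union> Savoid) pia c (\<lambda>u. wdprime pic u c)))"
proof -
  interpret mg N Ob Lc Ac Pt sinit "Starget \<union> Savoid" pia
    using fin trans_wf pia_wf occ_finite by unfold_locales auto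
  show ?thesis
  proof (intro conjI ballI)
    fix i assume i: "i \<in> agents N"
    show "Gval N Ob Lc Ac Pt sinit (Starget \<union> Savoid) pia {i} (\<lambda>u. wprime N K pic u i)
        \<le> ennreal (Gbar N Ob Lc Ac Pt sinit (Starget \<union> Savoid) pia {i} (\<lambda>u. wprime N K pic u i))"
      using i by (intro main) (auto simp: wprime_def intro!: sum_nonneg)
  next
    fix c assume c: "c \<in> Acomm N K"
    show "Gval N Ob Lc Ac Pt sinit (Starget \<union> Savoid) pia c (\<lambda>u. wdprime pic u c)
        \<le> ennreal (Gbar N Ob Lc Ac Pt sinit (Starget \<union> Savoid) pia c (\<lambda>u. wdprime pic u c))"
      using c by (intro main) (auto simp: Acomm_def wdprime_def)
  qed
qed

end
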